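(* For all $A,r\in\mathbb{N}$ and $\varepsilon>0$ there are $\delta>0$ and $S>0$ such that the following holds. Let $n_1,\ldots,n_r$ be positive integers with $n_i\leq An_j$ for all $i,j$, and let $\Lambda=(\lambda_{i,j})$ be a symmetric non-negative $r\times r$ matrix that is $\varepsilon$-separated and connected. Let $D=\mathrm{diag}(n_1,\ldots,n_r)$, let $y_1,\ldots,y_r$ be an orthonormal basis of $\mathbb{R}^r$ of eigenvectors of $\Lambda$ with eigenvalues $\theta_1\geq\cdots\geq\theta_r$ (so $y_1$ is the Perron–Frobenius eigenvector, chosen with non-negative entries), and let $x_j=D^{-1/2}y_j$. Let $\vec z\in[0,\infty)^r$ and write $\vec z=\sum_j\alpha_jx_j$. Then: (1) $\|\alpha_1x_1\|_2\geq\delta\|\vec z\|_2$; (2) for all $j$, $\|\alpha_jx_j\|_2\leq S\|\vec z\|_2$.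
   Context: $\Lambda$ is $\varepsilon$-separated if for all $i,j$ either $\lambda_{i,j}=0$ or $\varepsilon\leq\lambda_{i,j}\leq 1/\varepsilon$; connected if the graph on $[r]$ with edges $\{i,j\}$ for $\lambda_{i,j}>0$ is connected. The vectors $x_j$ are eigenvectors of $M$, $M_{i,j}=\lambda_{i,j}n_j/\sqrt{n_in_j}$. *)

theory Defs
  imports Main "HOL-Analysis.Analysis"
begin

text \<open>Vectors in R^r are represented as functions nat => real, only the
entries with index < r (i.e. indices 0..r-1) being relevant.
An r x r matrix is a function nat => nat => real with indices < r.\<close>

definition l2norm :: "nat \<Rightarrow> (nat \<Rightarrow> real) \<Rightarrow> real" where
  "l2norm r v = sqrt (\<Sum>i<r. (v i)\<^sup>2)"

definition eps_separated :: "nat \<Rightarrow> real \<Rightarrow> (nat \<Rightarrow> nat \<Rightarrow> real) \<Rightarrow> bool" where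
  "eps_separated r \<epsilon> L \<longleftrightarrow>
     (\<forall>i<r. \<forall>j<r. L i j = 0 \<or> (\<epsilon> \<le> L i j \<and> L i j \<le> 1 / \<epsilon>))"

definition matrix_graph_connected :: "nat \<Rightarrow> (nat \<Rightarrow> nat \<Rightarrow> real) \<Rightarrow> bool" where
  "matrix_graph_connected r L \<longleftrightarrow>
     (\<forall>i<r. \<forall>j<r. (\<lambda>a b. a < r \<and> b < r \<and> L a b > 0)\<^sup>*\<^sup>* i j)"

end

theory Submission
  imports Defs
begin



lemma perron_lower:
  fixes L :: "nat \<Rightarrow> nat \<Rightarrow> real" and y :: "nat \<Rightarrow> real" and \<theta> :: real
  assumes eps: "\<epsilon> > 0" and r: "r \<ge> 1"
   and sep: "eps_separated r \<epsilon> L" and con: "matrix_graph_connected r L"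
   and sym: "\<forall>i<r. \<forall>j<r. L i j = L j i" and nn: "\<forall>i<r. \<forall>j<r. L i j \<ge> 0"
   and unit: "(\<Sum>i<r. y i * y i) = 1"
   and eig: "\<forall>i<r. (\<Sum>k<r. L i k * y k) = \<theta> * y i"
   and ynn: "\<forall>i<r. y i \<ge> 0"
  shows "\<forall>i<r. y i \<ge> 1 / (sqrt (real r + 1) * (real r / \<epsilon>\<^sup>2 + 1) ^ (r*r))"
proof -
  define K where "K = real r / \<epsilon>\<^sup>2 + 1"
  have K1: "K \<ge> 1" unfolding K_def using eps by simp
  define m where "m = Max (y ` {..<r})"
  have "m \<in> y ` {..<r}" unfolding m_def using r by (intro Max_in) (auto simp: lessThan_empty_iff)
  then obtain i0 where i0: "i0 < r" "y i0 = m" by auto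
  have i0max: "\<forall>i<r. y i \<le> y i0" using i0 unfolding m_def by auto
  have "1 \<le> (\<Sum>i<r. y i0 * y i0)"
    unfolding unit[symmetric]
    by (intro sum_mono mult_mono) (use i0max ynn i0 in auto)
  then have "1 \<le> real r * (y i0)\<^sup>2" by (simp add: power2_eq_square)
  then have "1 / real r \<le> (y i0)\<^sup>2" using r by (simp add: field_simps)
  then have "sqrt (1 / real r) \<le> y i0"
    using ynn i0 real_sqrt_le_mono by fastforce
  moreover have "1 / sqrt (real r + 1) \<le> sqrt (1 / real r)"
    using r by (simp add: real_sqrt_divide field_simps)
  ultimately have ymax: "1 / sqrt (real r + 1) \<le> y i0" by linarith
  have ypos: "y i0 > 0"
    using ymax r by (smt (verit) divide_pos_pos real_sqrt_gt_zero of_nat_0_le_iff)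
  have Lle: "\<forall>i<r. \<forall>j<r. L i j \<le> 1/\<epsilon>"
    using sep eps unfolding eps_separated_def by (metis divide_pos_pos less_eq_real_def zero_less_one)
  have Lge: "\<forall>i<r. \<forall>j<r. L i j > 0 \<longrightarrow> L i j \<ge> \<epsilon>"
    using sep unfolding eps_separated_def by force
  have "\<theta> * y i0 \<le> (\<Sum>k<r. 1/\<epsilon> * y i0)"
    unfolding eig[rule_format, OF i0(1), symmetric]
    by (intro sum_mono mult_mono) (use Lle ynn i0 i0max eps in auto)
  also have "\<dots> = real r / \<epsilon> * y i0" by simp
  finally have thle: "\<theta> \<le> real r / \<epsilon>" using ypos by (metis mult_le_cancel_right_pos times_divide_eq_left)
  have edge: "y a \<le> K * y b" if ab: "a < r" "b < r" "L a b > 0" for a b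
  proof -
    have "L b a \<ge> \<epsilon>" using Lge sym ab by auto
    then have "\<epsilon> * y a \<le> L b a * y a" using ynn ab by (intro mult_right_mono) auto
    also have "\<dots> \<le> (\<Sum>k<r. L b k * y k)"
      by (rule member_le_sum[where f="\<lambda>k. L b k * y k"]) (use ab nn ynn in auto)
    also have "\<dots> = \<theta> * y b" using eig ab by auto
    also have "\<dots> \<le> real r / \<epsilon> * y b" using thle ynn ab by (intro mult_right_mono) auto
    finally have "\<epsilon> * y a \<le> real r / \<epsilon> * y b" .
    then have "y a \<le> real r / \<epsilon>\<^sup>2 * y b" using eps
      by (simp add: field_simps power2_eq_square)
    also have "\<dots> \<le> K * y b" unfolding K_def using ynn ab by (intro mult_right_mono) auto
    finally show ?thesis .
  qed
  define R where "R = {(a, b). a < r \<and> b < r \<and> L a b > 0}"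
  have pw: "y i0 / K ^ k \<le> y j" if "(i0, j) \<in> R ^^ k" for k j
    using that
  proof (induction k arbitrary: j)
    case 0 then show ?case by simp
  next
    case (Suc k)
    from Suc.prems obtain a where a: "(i0, a) \<in> R ^^ k" "(a, j) \<in> R" by (rule relpow_Suc_E)
    have "y i0 / K ^ k \<le> y a" using Suc.IH a by auto
    also have "\<dots> \<le> K * y j" using edge a(2) unfolding R_def by auto
    finally show ?case using K1 by (simp add: field_simps)
  qed
  have finR: "finite R" unfolding R_def
    by (rule finite_subset[of _ "{..<r} \<times> {..<r}"]) auto
  have cardR: "card R \<le> r * r" unfolding R_def
    using card_mono[of "{..<r} \<times> {..<r}" "{(a, b). a < r \<and> b < r \<and> L a b > 0}"]
    by (auto simp: card_cartesian_product)
  show ?thesis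
  proof (intro allI impI)
    fix i assume ir: "i < r"
    have "(\<lambda>a b. a < r \<and> b < r \<and> L a b > 0)\<^sup>*\<^sup>* i0 i"
      using con i0 ir unfolding matrix_graph_connected_def by auto
    then have "(i0, i) \<in> R\<^sup>*" unfolding R_def rtranclp_rtrancl_eq by simp
    then obtain k where k: "k \<le> card R" "(i0, i) \<in> R ^^ k"
      using rtrancl_finite_eq_relpow[OF finR] by auto
    have kk: "k \<le> r * r" using k cardR by linarith
    have "1 / (sqrt (real r + 1) * K ^ (r*r)) = (1 / sqrt (real r + 1)) / K ^ (r*r)" by simp
    also have "\<dots> \<le> y i0 / K ^ (r*r)"
      using ymax K1 by (intro divide_right_mono) auto
    also have "\<dots> \<le> y i0 / K ^ k"
      using K1 ypos kk by (intro divide_left_mono power_increasing) auto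
    also have "\<dots> \<le> y i" using pw k by auto
    finally show "y i \<ge> 1 / (sqrt (real r + 1) * (real r / \<epsilon>\<^sup>2 + 1) ^ (r*r))"
      unfolding K_def .
  qed
qed


lemma sum_sq_le_sq_sum:
  fixes w :: "nat \<Rightarrow> real"
  shows "(\<forall>i<r. w i \<ge> 0) \<Longrightarrow> (\<Sum>i<r. (w i)\<^sup>2) \<le> (\<Sum>i<r. w i)\<^sup>2"
proof (induction r)
  case 0 then show ?case by simp
next
  case (Suc r)
  have s: "(\<Sum>i<r. w i) \<ge> 0" using Suc.prems by (intro sum_nonneg) auto
  have "(\<Sum>i<Suc r. (w i)\<^sup>2) = (\<Sum>i<r. (w i)\<^sup>2) + (w r)\<^sup>2" by simp
  also have "\<dots> \<le> (\<Sum>i<r. w i)\<^sup>2 + (w r)\<^sup>2" using Suc by auto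
  also have "\<dots> \<le> ((\<Sum>i<r. w i) + w r)\<^sup>2" using s Suc.prems
    by (simp add: power2_eq_square algebra_simps)
  finally show ?case by simp
qed

lemma main_bounds:
  fixes A r :: nat and \<epsilon> c :: real and n :: "nat \<Rightarrow> nat" and y :: "nat \<Rightarrow> nat \<Rightarrow> real"
    and x :: "nat \<Rightarrow> nat \<Rightarrow> real" and z \<alpha> :: "nat \<Rightarrow> real"
  assumes r: "r \<ge> 1" and c: "c > 0"
    and npos: "\<forall>i<r. n i > 0"
    and nA: "\<forall>i<r. \<forall>j<r. n i \<le> A * n j"
    and orth: "\<forall>j<r. \<forall>k<r. (\<Sum>i<r. y j i * y k i) = (if j = k then 1 else 0)"
    and y0c: "\<forall>i<r. y 0 i \<ge> c"
    and xdef: "\<forall>j<r. \<forall>i<r. x j i = y j i / sqrt (real (n i))"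
    and znn: "\<forall>i<r. z i \<ge> 0"
    and zdec: "\<forall>i<r. z i = (\<Sum>j<r. \<alpha> j * x j i)"
  shows "l2norm r (\<lambda>i. \<alpha> 0 * x 0 i) \<ge> c / (real A + 1) * l2norm r z \<and>
     (\<forall>j<r. l2norm r (\<lambda>i. \<alpha> j * x j i) \<le> (real A + 1) * l2norm r z)"
proof -
  define n0 where "n0 = real (n 0)"
  have n0pos: "n0 > 0" using npos r unfolding n0_def by auto
  have nposr: "\<forall>i<r. real (n i) > 0" using npos by auto
  have r0: "0 < r" using r by simp
  have nle: "\<forall>i<r. real (n i) \<le> real A * n0"
  proof (intro allI impI)
    fix i assume "i < r"
    then have "n i \<le> A * n 0" using nA r0 by blast
    then have "real (n i) \<le> real (A * n 0)" by (simp only: of_nat_le_iff)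
    then show "real (n i) \<le> real A * n0" unfolding n0_def by simp
  qed
  have nge: "\<forall>i<r. n0 \<le> real A * real (n i)"
  proof (intro allI impI)
    fix i assume "i < r"
    then have "n 0 \<le> A * n i" using nA r0 by blast
    then have "real (n 0) \<le> real (A * n i)" by (simp only: of_nat_le_iff)
    then show "n0 \<le> real A * real (n i)" unfolding n0_def by simp
  qed
  have "n 0 \<le> A * n 0" "n 0 > 0" using nA npos r0 by auto
  then have "A \<ge> 1" by (cases A) auto
  then have A1: "real A \<ge> 1" by simp
  define w where "w i = sqrt (real (n i)) * z i" for i
  have wnn: "\<forall>i<r. w i \<ge> 0" using znn unfolding w_def by auto
  have wdec: "w i = (\<Sum>j<r. \<alpha> j * y j i)" if "i < r" for i
  proof -
    have "w i = sqrt (real (n i)) * (\<Sum>j<r. \<alpha> j * (y j i / sqrt (real (n i))))"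
      unfolding w_def using zdec xdef that by simp
    also have "\<dots> = (\<Sum>j<r. \<alpha> j * y j i)"
      unfolding sum_distrib_left using nposr that by (intro sum.cong) auto
    finally show ?thesis .
  qed
  have alpha: "\<alpha> k = (\<Sum>i<r. w i * y k i)" if "k < r" for k
  proof -
    have "(\<Sum>i<r. w i * y k i) = (\<Sum>i<r. \<Sum>j<r. \<alpha> j * y j i * y k i)"
      using wdec by (simp add: sum_distrib_right)
    also have "\<dots> = (\<Sum>j<r. \<Sum>i<r. \<alpha> j * (y j i * y k i))"
      by (subst sum.swap) (simp add: mult.assoc)
    also have "\<dots> = (\<Sum>j<r. \<alpha> j * (if j = k then 1 else 0))"
      using orth that by (simp add: sum_distrib_left[symmetric])
    also have "\<dots> = (\<Sum>j<r. if j = k then \<alpha> j else 0)" by (intro sum.cong) auto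
    also have "\<dots> = \<alpha> k" using that by (simp add: sum.delta)
    finally show ?thesis by simp
  qed
  have ynorm: "(\<Sum>i<r. (y j i)\<^sup>2) = 1" if "j < r" for j
    using orth that by (simp add: power2_eq_square)
  have nrm: "l2norm r (\<lambda>i. \<alpha> j * x j i) = sqrt ((\<alpha> j)\<^sup>2 * (\<Sum>i<r. (y j i)\<^sup>2 / real (n i)))"
    if "j < r" for j
    unfolding l2norm_def using xdef that nposr
    by (simp add: sum_distrib_left power_mult_distrib power_divide)
  have zsq: "(\<Sum>i<r. (z i)\<^sup>2) = (\<Sum>i<r. (w i)\<^sup>2 / real (n i))"
    unfolding w_def using nposr by (intro sum.cong) (auto simp: power_mult_distrib)
  have invle: "1 / real (n i) \<le> real A / n0" if "i < r" for i
    using nge nposr n0pos that by (simp add: field_simps)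
  have invge: "1 / (real A * n0) \<le> 1 / real (n i)" if "i < r" for i
    using nle nposr n0pos A1 that by (intro divide_left_mono) (auto intro!: mult_pos_pos)
  have ya: "(\<Sum>i<r. (y j i)\<^sup>2 / real (n i)) \<le> real A / n0" if "j < r" for j
  proof -
    have "(\<Sum>i<r. (y j i)\<^sup>2 / real (n i)) \<le> (\<Sum>i<r. (y j i)\<^sup>2 * (real A / n0))"
      using invle by (intro sum_mono) (simp add: divide_inverse mult_left_mono)
    also have "\<dots> = real A / n0" by (simp only: sum_distrib_right[symmetric] ynorm[OF that] mult_1_left)
    finally show ?thesis .
  qed
  have yb: "(\<Sum>i<r. (y 0 i)\<^sup>2 / real (n i)) \<ge> 1 / (real A * n0)"
  proof -
    have "(\<Sum>i<r. (y 0 i)\<^sup>2 * (1 / (real A * n0))) \<le> (\<Sum>i<r. (y 0 i)\<^sup>2 / real (n i))"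
      using invge by (intro sum_mono) (simp add: divide_inverse mult_left_mono)
    moreover have "(\<Sum>i<r. (y 0 i)\<^sup>2 * (1 / (real A * n0))) = 1 / (real A * n0)"
      using r0 by (simp only: sum_distrib_right[symmetric] ynorm[OF r0] mult_1_left)
    ultimately show ?thesis by simp
  qed
  have wz1: "(\<Sum>i<r. (w i)\<^sup>2) \<le> real A * n0 * (\<Sum>i<r. (z i)\<^sup>2)"
    unfolding sum_distrib_left w_def
    using nle by (intro sum_mono) (auto simp: power_mult_distrib intro: mult_right_mono)
  have wz2: "(\<Sum>i<r. (z i)\<^sup>2) \<le> real A / n0 * (\<Sum>i<r. (w i)\<^sup>2)"
    unfolding zsq sum_distrib_left
    using invle by (intro sum_mono) (simp add: divide_inverse mult_left_mono mult.commute[of _ "(w _)\<^sup>2"])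
  have Z: "(\<Sum>i<r. (z i)\<^sup>2) \<ge> 0" by (intro sum_nonneg) auto
  have W: "(\<Sum>i<r. (w i)\<^sup>2) \<ge> 0" by (intro sum_nonneg) auto
  have part2: "l2norm r (\<lambda>i. \<alpha> j * x j i) \<le> (real A + 1) * l2norm r z" if j: "j < r" for j
  proof -
    have cs: "(\<alpha> j)\<^sup>2 \<le> (\<Sum>i<r. (w i)\<^sup>2)"
      using Cauchy_Schwarz_ineq_sum[of w "y j" "{..<r}"] alpha[OF j] ynorm[OF j] by simp
    have "(\<alpha> j)\<^sup>2 * (\<Sum>i<r. (y j i)\<^sup>2 / real (n i)) \<le> (\<Sum>i<r. (w i)\<^sup>2) * (real A / n0)"
      using cs ya[OF j] W by (intro mult_mono) (auto intro: sum_nonneg)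
    also have "\<dots> \<le> real A * n0 * (\<Sum>i<r. (z i)\<^sup>2) * (real A / n0)"
      using wz1 A1 n0pos by (intro mult_right_mono) auto
    also have "\<dots> = (real A)\<^sup>2 * (\<Sum>i<r. (z i)\<^sup>2)" using n0pos by (simp add: power2_eq_square)
    also have "\<dots> \<le> (real A + 1)\<^sup>2 * (\<Sum>i<r. (z i)\<^sup>2)"
      using Z by (intro mult_right_mono power_mono) auto
    finally have "sqrt ((\<alpha> j)\<^sup>2 * (\<Sum>i<r. (y j i)\<^sup>2 / real (n i))) \<le> sqrt ((real A + 1)\<^sup>2 * (\<Sum>i<r. (z i)\<^sup>2))"
      by (rule real_sqrt_le_mono)
    then show ?thesis using nrm[OF j] by (simp add: l2norm_def real_sqrt_mult)
  qed
  have part1: "c / (real A + 1) * l2norm r z \<le> l2norm r (\<lambda>i. \<alpha> 0 * x 0 i)"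
  proof -
    have a0: "\<alpha> 0 \<ge> c * (\<Sum>i<r. w i)"
      unfolding alpha[OF r0] sum_distrib_left
      using y0c wnn by (intro sum_mono) (simp add: mult.commute[of "w _"] mult_right_mono)
    have sw: "(\<Sum>i<r. w i) \<ge> 0" using wnn by (intro sum_nonneg) auto
    have a0sq: "c\<^sup>2 * (\<Sum>i<r. (w i)\<^sup>2) \<le> (\<alpha> 0)\<^sup>2"
    proof -
      have "c\<^sup>2 * (\<Sum>i<r. (w i)\<^sup>2) \<le> c\<^sup>2 * (\<Sum>i<r. w i)\<^sup>2"
        using sum_sq_le_sq_sum[of r w] wnn by (intro mult_left_mono) auto
      also have "\<dots> = (c * (\<Sum>i<r. w i))\<^sup>2" by (simp add: power_mult_distrib)
      also have "\<dots> \<le> (\<alpha> 0)\<^sup>2" using a0 c sw by (intro power_mono) auto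
      finally show ?thesis .
    qed
    have "(c / (real A + 1))\<^sup>2 * (\<Sum>i<r. (z i)\<^sup>2) \<le> (c / real A)\<^sup>2 * (\<Sum>i<r. (z i)\<^sup>2)"
      using Z A1 c by (intro mult_right_mono power_mono divide_left_mono) auto
    also have "\<dots> \<le> (c / real A)\<^sup>2 * (real A / n0 * (\<Sum>i<r. (w i)\<^sup>2))"
      using wz2 by (intro mult_left_mono) auto
    also have "\<dots> = c\<^sup>2 * (\<Sum>i<r. (w i)\<^sup>2) * (1 / (real A * n0))"
      using A1 n0pos by (simp add: power2_eq_square field_simps)
    also have "\<dots> \<le> (\<alpha> 0)\<^sup>2 * (\<Sum>i<r. (y 0 i)\<^sup>2 / real (n i))"
      using a0sq yb A1 n0pos by (intro mult_mono) auto
    finally have "sqrt ((c / (real A + 1))\<^sup>2 * (\<Sum>i<r. (z i)\<^sup>2)) \<le> sqrt ((\<alpha> 0)\<^sup>2 * (\<Sum>i<r. (y 0 i)\<^sup>2 / real (n i)))"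
      by (rule real_sqrt_le_mono)
    then show ?thesis using nrm[OF r0]
      using c A1 by (simp add: l2norm_def real_sqrt_mult)
  qed
  show ?thesis using part1 part2 by auto
qed
theorem lemma2p2:
  fixes A r :: nat and \<epsilon> :: real
  assumes "\<epsilon> > 0"
  shows "\<exists>\<delta>>0. \<exists>S>0. \<forall>(n :: nat \<Rightarrow> nat) (L :: nat \<Rightarrow> nat \<Rightarrow> real)
           (y :: nat \<Rightarrow> nat \<Rightarrow> real) (\<theta> :: nat \<Rightarrow> real) (x :: nat \<Rightarrow> nat \<Rightarrow> real)
           (z :: nat \<Rightarrow> real) (\<alpha> :: nat \<Rightarrow> real).
     (\<forall>i<r. n i > 0) \<and>
     (\<forall>i<r. \<forall>j<r. n i \<le> A * n j) \<and>
     (\<forall>i<r. \<forall>j<r. L i j = L j i) \<and>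
     (\<forall>i<r. \<forall>j<r. L i j \<ge> 0) \<and>
     eps_separated r \<epsilon> L \<and>
     matrix_graph_connected r L \<and>
     (\<forall>j<r. \<forall>k<r. (\<Sum>i<r. y j i * y k i) = (if j = k then 1 else 0)) \<and>
     (\<forall>j<r. \<forall>i<r. (\<Sum>k<r. L i k * y j k) = \<theta> j * y j i) \<and>
     (\<forall>j<r. \<forall>k<r. j \<le> k \<longrightarrow> \<theta> k \<le> \<theta> j) \<and>
     (\<forall>i<r. y 0 i \<ge> 0) \<and>
     (\<forall>j<r. \<forall>i<r. x j i = y j i / sqrt (real (n i))) \<and>
     (\<forall>i<r. z i \<ge> 0) \<and>
     (\<forall>i<r. z i = (\<Sum>j<r. \<alpha> j * x j i))
     \<longrightarrow>
     l2norm r (\<lambda>i. \<alpha> 0 * x 0 i) \<ge> \<delta> * l2norm r z \<and>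
     (\<forall>j<r. l2norm r (\<lambda>i. \<alpha> j * x j i) \<le> S * l2norm r z)"
  proof -
  define c where "c = 1 / (sqrt (real r + 1) * (real r / \<epsilon>\<^sup>2 + 1) ^ (r*r))"
  have cpos: "c > 0" unfolding c_def using assms
    by (intro divide_pos_pos mult_pos_pos zero_less_power) (auto intro: add_nonneg_pos)
  have dpos: "c / (real A + 1) > 0" using cpos by simp
  have spos: "real A + 1 > 0" by simp
  show ?thesis
  proof (rule exI[of _ "c / (real A + 1)"], rule conjI[OF dpos], rule exI[of _ "real A + 1"],
      rule conjI[OF spos], intro allI impI)
    fix n :: "nat \<Rightarrow> nat" and L :: "nat \<Rightarrow> nat \<Rightarrow> real" and y :: "nat \<Rightarrow> nat \<Rightarrow> real"
      and \<theta> :: "nat \<Rightarrow> real" and x :: "nat \<Rightarrow> nat \<Rightarrow> real" and z \<alpha> :: "nat \<Rightarrow> real"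
    assume H: "(\<forall>i<r. n i > 0) \<and>
     (\<forall>i<r. \<forall>j<r. n i \<le> A * n j) \<and>
     (\<forall>i<r. \<forall>j<r. L i j = L j i) \<and>
     (\<forall>i<r. \<forall>j<r. L i j \<ge> 0) \<and>
     eps_separated r \<epsilon> L \<and>
     matrix_graph_connected r L \<and>
     (\<forall>j<r. \<forall>k<r. (\<Sum>i<r. y j i * y k i) = (if j = k then 1 else 0)) \<and>
     (\<forall>j<r. \<forall>i<r. (\<Sum>k<r. L i k * y j k) = \<theta> j * y j i) \<and>
     (\<forall>j<r. \<forall>k<r. j \<le> k \<longrightarrow> \<theta> k \<le> \<theta> j) \<and>
     (\<forall>i<r. y 0 i \<ge> 0) \<and>
     (\<forall>j<r. \<forall>i<r. x j i = y j i / sqrt (real (n i))) \<and>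
     (\<forall>i<r. z i \<ge> 0) \<and>
     (\<forall>i<r. z i = (\<Sum>j<r. \<alpha> j * x j i))"
    show "l2norm r (\<lambda>i. \<alpha> 0 * x 0 i) \<ge> c / (real A + 1) * l2norm r z \<and>
     (\<forall>j<r. l2norm r (\<lambda>i. \<alpha> j * x j i) \<le> (real A + 1) * l2norm r z)"
    proof (cases "r = 0")
      case True then show ?thesis by (simp add: l2norm_def)
    next
      case False
      then have r1: "r \<ge> 1" and r0: "0 < r" by auto
      have y0: "\<forall>i<r. y 0 i \<ge> c"
        unfolding c_def
        by (rule perron_lower[where L = L and \<theta> = "\<theta> 0"]) (use H assms r0 in auto)
      show ?thesis
        by (rule main_bounds[where n=n and y=y and x=x and z=z and \<alpha>=\<alpha>])
          (use H r1 cpos y0 in auto)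
    qed
  qed
qed

end
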